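(* Let $(G=(V,E),k,p)$ be an instance of Max $(k,n-k)$-Cut, write $V=\{v_1,\dots,v_{|V|}\}$, and let $\mathcal{F}$ be a $(|V|,k+p)$-universal set. For each $f\in\mathcal{F}$ let $G_f$ be a copy of $G$ in which the copy of $v_i$ is colored red if $f(i)=0$ and blue if $f(i)=1$. Then $(G,k,p)$ is a yes-instance of Max $(k,n-k)$-Cut if and only if at least one of the instances $(G_f,k,p)$, $f\in\mathcal{F}$, is a yes-instance of NC-Max $(k,n-k)$-Cut.
   Context: Graphs are finite, simple and undirected; $E(X,V\setminus X)$ denotes the set of edges with exactly one endpoint in $X$. Max $(k,n-k)$-Cut: given $G=(V,E)$ and positive integers $k,p$, decide whether there is $X\subseteq V$ with $|X|=k$ and $|E(X,V\setminus X)|\ge p$. NC-Max $(k,n-k)$-Cut: given a graph $G=(V,E)$ each of whose nodes is colored red or blue, and positive integers $k,p$, decide whether there is $X\subseteq V$ consisting of exactly $k$ red nodes and no blue nodes such that at least $p$ edges of $E(X,V\setminus X)$ have a blue endpoint. A set $\mathcal{F}$ of functions $\{1,\dots,n\}\to\{0,1\}$ is an $(n,t)$-universal set if for every $I\subseteq\{1,\dots,n\}$ with $|I|\le t$ and every $f':I\to\{0,1\}$ there is $f\in\mathcal{F}$ with $f(i)=f'(i)$ for all $i\in I$. *)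

theory Defs
  imports Main
begin

definition simple_graph :: "'a set \<Rightarrow> 'a set set \<Rightarrow> bool" where
  "simple_graph V E \<longleftrightarrow> finite V \<and>
     (\<forall>e\<in>E. \<exists>u v. u \<in> V \<and> v \<in> V \<and> u \<noteq> v \<and> e = {u, v})"

definition cut_edges :: "'a set set \<Rightarrow> 'a set \<Rightarrow> 'a set set" where
  "cut_edges E X = {e \<in> E. card (e \<inter> X) = 1}"

definition max_kcut :: "'a set \<Rightarrow> 'a set set \<Rightarrow> nat \<Rightarrow> nat \<Rightarrow> bool" where
  "max_kcut V E k p \<longleftrightarrow> (\<exists>X. X \<subseteq> V \<and> card X = k \<and> card (cut_edges E X) \<ge> p)"

(* NC-Max (k,n-k)-Cut yes-instance; blue x = True means x is blue, otherwise red *)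
definition nc_max_kcut :: "'a set \<Rightarrow> 'a set set \<Rightarrow> ('a \<Rightarrow> bool) \<Rightarrow> nat \<Rightarrow> nat \<Rightarrow> bool" where
  "nc_max_kcut V E blue k p \<longleftrightarrow>
     (\<exists>X. X \<subseteq> V \<and> card X = k \<and> (\<forall>x\<in>X. \<not> blue x) \<and>
          card {e \<in> cut_edges E X. \<exists>b\<in>e. blue b} \<ge> p)"

(* (n,t)-universal set of functions {1..n} -> {0,1}; value True encodes 1, False encodes 0 *)
definition universal_set :: "nat \<Rightarrow> nat \<Rightarrow> (nat \<Rightarrow> bool) set \<Rightarrow> bool" where
  "universal_set n t F \<longleftrightarrow>
     (\<forall>I f'. I \<subseteq> {1..n} \<and> card I \<le> t \<longrightarrow> (\<exists>f\<in>F. \<forall>i\<in>I. f i = f' i))"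

end

theory Submission
  imports Defs
begin

lemma sg_card2: "simple_graph V E \<Longrightarrow> e \<in> E \<Longrightarrow> card e = 2 \<and> finite e"
  unfolding simple_graph_def by auto

theorem lemma7:
  fixes V :: "'a set" and E :: "'a set set" and v :: "nat \<Rightarrow> 'a"
    and F :: "(nat \<Rightarrow> bool) set" and k p :: nat
  assumes "simple_graph V E"
    and "bij_betw v {1..card V} V"
    and "universal_set (card V) (k + p) F"
    and "k > 0" and "p > 0"
  shows "max_kcut V E k p \<longleftrightarrow>
         (\<exists>f\<in>F. nc_max_kcut V E (\<lambda>x. f (inv_into {1..card V} v x)) k p)"
proof -
  let ?n = "card V"
  let ?iv = "inv_into {1..?n} v"
  have fV: "finite V" using assms(1) unfolding simple_graph_def by simp
  have Esub: "E \<subseteq> Pow V" using assms(1) unfolding simple_graph_def by auto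
  have fE: "finite E" using finite_subset[OF Esub] fV by simp
  have fcut: "finite (cut_edges E X)" for X unfolding cut_edges_def using fE by simp
  have e2: "\<And>e. e \<in> E \<Longrightarrow> card e = 2 \<and> finite e"
    using sg_card2[OF assms(1)] by blast
  have vsurj: "v ` {1..?n} = V" using assms(2) by (simp add: bij_betw_def)
  show ?thesis
  proof
    assume "max_kcut V E k p"
    then obtain X where X: "X \<subseteq> V" "card X = k" "card (cut_edges E X) \<ge> p"
      unfolding max_kcut_def by blast
    obtain C where C: "C \<subseteq> cut_edges E X" "card C = p"
      using X(3) by (meson obtain_subset_with_card_n)
    have fC: "finite C" using C fcut finite_subset by blast
    have CE: "C \<subseteq> E" using C(1) unfolding cut_edges_def by auto
    have eX: "card (e \<inter> X) = 1" if "e \<in> C" for e using that C(1) unfolding cut_edges_def by auto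
    have dle: "card (e - X) \<le> 1" if "e \<in> C" for e
    proof -
      have "card e = card (e \<inter> X) + card (e - X)"
        using e2[of e] CE that using card_Int_Diff[of e X] by blast
      thus ?thesis using e2[of e] CE that eX[OF that] by auto
    qed
    have dne: "e - X \<noteq> {}" if "e \<in> C" for e
    proof
      assume "e - X = {}"
      hence "e \<inter> X = e" by blast
      thus False using eX[OF that] e2[of e] CE that by auto
    qed
    define Y where "Y = X \<union> (\<Union>e\<in>C. e - X)"
    have cY: "card Y \<le> k + p"
    proof -
      have "card (\<Union>e\<in>C. e - X) \<le> (\<Sum>e\<in>C. card (e - X))" by (rule card_UN_le[OF fC])
      also have "\<dots> \<le> (\<Sum>e\<in>C. 1)" by (rule sum_mono) (use dle in auto)
      also have "\<dots> = p" using C(2) by simp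
      finally have "card (\<Union>e\<in>C. e - X) \<le> p" .
      moreover have "card Y \<le> card X + card (\<Union>e\<in>C. e - X)" unfolding Y_def by (rule card_Un_le)
      ultimately show ?thesis using X(2) by linarith
    qed
    have YV: "Y \<subseteq> V" unfolding Y_def using X(1) CE Esub by blast
    define I where "I = ?iv ` Y"
    have IS: "I \<subseteq> {1..?n}" unfolding I_def
    proof
      fix i assume "i \<in> ?iv ` Y"
      then obtain y where "y \<in> Y" "i = ?iv y" by blast
      thus "i \<in> {1..?n}" using YV vsurj inv_into_into[of y v "{1..?n}"] by blast
    qed
    have fY: "finite Y" using YV fV finite_subset by blast
    have cI: "card I \<le> k + p" unfolding I_def using card_image_le[OF fY, of ?iv] cY by linarith
    obtain f where f: "f \<in> F" "\<forall>i\<in>I. f i = (v i \<notin> X)"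
      using assms(3) IS cI unfolding universal_set_def
      by (elim allE[where x=I] allE[where x="\<lambda>i. v i \<notin> X"]) auto
    have blue: "f (?iv x) = (x \<notin> X)" if "x \<in> Y" for x
    proof -
      have "?iv x \<in> I" unfolding I_def using that by blast
      moreover have "v (?iv x) = x" using that YV vsurj f_inv_into_f[of x v "{1..?n}"] by blast
      ultimately show ?thesis using f(2) by auto
    qed
    have "C \<subseteq> {e \<in> cut_edges E X. \<exists>b\<in>e. f (?iv b)}"
    proof
      fix e assume e: "e \<in> C"
      then obtain b where b: "b \<in> e - X" using dne by blast
      hence "b \<in> Y" unfolding Y_def using e by blast
      hence "f (?iv b)" using blue b by auto
      thus "e \<in> {e \<in> cut_edges E X. \<exists>b\<in>e. f (?iv b)}" using b e C(1) by auto
    qed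
    hence "card {e \<in> cut_edges E X. \<exists>b\<in>e. f (?iv b)} \<ge> p"
      using C(2) card_mono[of "{e \<in> cut_edges E X. \<exists>b\<in>e. f (?iv b)}" C] fcut[of X] by auto
    moreover have "\<forall>x\<in>X. \<not> f (?iv x)" using blue unfolding Y_def by auto
    ultimately show "\<exists>f\<in>F. nc_max_kcut V E (\<lambda>x. f (?iv x)) k p"
      using f(1) X unfolding nc_max_kcut_def by blast
  next
    assume "\<exists>f\<in>F. nc_max_kcut V E (\<lambda>x. f (?iv x)) k p"
    then obtain f X where X: "X \<subseteq> V" "card X = k"
      "card {e \<in> cut_edges E X. \<exists>b\<in>e. f (?iv b)} \<ge> p"
      unfolding nc_max_kcut_def by blast
    have "card {e \<in> cut_edges E X. \<exists>b\<in>e. f (?iv b)} \<le> card (cut_edges E X)"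
      by (rule card_mono[OF fcut]) auto
    thus "max_kcut V E k p" using X unfolding max_kcut_def by auto
  qed
qed

end
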